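(* Let $\mu$ be a probability measure on $\{0,1\}^{\mathbb{N}}$, $X\sim\mu$, and for $i,j\in\mathbb{N}$ let $p_i=\mathbb{E}[X_i]$ and $r_{ij}=\mathbb{E}[X_iX_j]$. Then for all $i,j\in\mathbb{N}$ and all $t\ge0$, $$\mathbb{E}\exp\left\{t\left[(X_i-p_i)-(X_j-p_j)\right]\right\}\le\exp\left(\frac{t^2}{\log\frac{2}{p_i+p_j-2r_{ij}}}\right).$$
   Context: When $p_i+p_j-2r_{ij}=0$, the right-hand side is interpreted as $\exp(0)=1$. *)

theory Defs
  imports "HOL-Probability.Probability"
begin

text \<open>The measurable space {0,1}^N with its product sigma-algebra; a point is
  a function nat => bool and the coordinate X_i(w) is of_bool (w i).\<close>

definition cube :: "(nat \<Rightarrow> bool) measure" where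
  "cube = PiM UNIV (\<lambda>_. count_space UNIV)"

end

theory Submission
  imports Defs
begin

lemma h_nonneg: fixes t::real assumes "t \<ge> 0" shows "(t - 1) * exp t + 1 \<ge> 0"
proof -
  have "(0 - 1) * exp 0 + 1 \<le> (t - 1) * exp t + (1::real)"
  proof (rule DERIV_nonneg_imp_nondecreasing[OF assms])
    fix x::real assume "0 \<le> x" "x \<le> t"
    show "\<exists>y. ((\<lambda>t. (t - 1) * exp t + 1) has_real_derivative y) (at x) \<and> 0 \<le> y"
      by (rule exI[of _ "x * exp x"]) (auto intro!: derivative_eq_intros simp: algebra_simps \<open>0 \<le> x\<close>)
  qed
  thus ?thesis by simp
qed

lemma g_nonneg: fixes t::real assumes "t \<ge> 0" shows "(t - 2) * exp t + t + 2 \<ge> 0"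
proof -
  have "(0 - 2) * exp 0 + 0 + 2 \<le> (t - 2) * exp t + t + (2::real)"
  proof (rule DERIV_nonneg_imp_nondecreasing[OF assms])
    fix x::real assume "0 \<le> x" "x \<le> t"
    show "\<exists>y. ((\<lambda>t. (t - 2) * exp t + t + 2) has_real_derivative y) (at x) \<and> 0 \<le> y"
      by (rule exI[of _ "(x - 1) * exp x + 1"]) (use h_nonneg[of x] \<open>0 \<le> x\<close> in \<open>auto intro!: derivative_eq_intros simp: algebra_simps\<close>)
  qed
  thus ?thesis by simp
qed

lemma phi_mono: fixes t L::real assumes "0 < t" "t \<le> L"
  shows "(exp t - 1 - t) / t^2 \<le> (exp L - 1 - L) / L^2"
proof (rule DERIV_nonneg_imp_nondecreasing[OF assms(2)])
  fix x::real assume x: "t \<le> x" "x \<le> L"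
  hence "x > 0" using assms by auto
  show "\<exists>y. ((\<lambda>t. (exp t - 1 - t) / t^2) has_real_derivative y) (at x) \<and> 0 \<le> y"
  proof (rule exI[of _ "((x - 2) * exp x + x + 2) / x^3"], rule conjI)
    show "((\<lambda>t. (exp t - 1 - t) / t^2) has_real_derivative ((x - 2) * exp x + x + 2) / x^3) (at x)"
      using \<open>x > 0\<close> by (auto intro!: derivative_eq_intros simp: field_simps power2_eq_square power3_eq_cube)
    show "0 \<le> ((x - 2) * exp x + x + 2) / x^3" using g_nonneg[of x] \<open>x > 0\<close> by simp
  qed
qed

lemma sinh_ineq: fixes t::real assumes "t \<ge> 0" shows "exp (-t) - 1 + t \<le> exp t - 1 - t"
proof -
  have "exp 0 - exp (-0) - 2*0 \<le> exp t - exp (-t) - 2*(t::real)"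
  proof (rule DERIV_nonneg_imp_nondecreasing[OF assms])
    fix x::real assume "0 \<le> x" "x \<le> t"
    have "exp x + exp (-x) \<ge> 2"
    proof -
      have "exp x * exp (-x) = 1" by (simp add: exp_minus)
      moreover have "0 \<le> (exp x - exp (-x))^2" by simp
      ultimately have "4 \<le> (exp x + exp (-x))^2" by (simp add: power2_eq_square algebra_simps)
      hence "(2::real)^2 \<le> (exp x + exp (-x))^2" by simp
      thus ?thesis by (rule power2_le_imp_le) (simp add: add_nonneg_nonneg)
    qed
    thus "\<exists>y. ((\<lambda>t. exp t - exp (-t) - 2*t) has_real_derivative y) (at x) \<and> 0 \<le> y"
      by (intro exI[of _ "exp x + exp (-x) - 2"]) (auto intro!: derivative_eq_intros)
  qed
  thus ?thesis by simp
qed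

lemma real_main:
  fixes a b t :: real
  assumes a: "a \<ge> 0" and b: "b \<ge> 0" and t: "t \<ge> 0" and q: "a + b > 0"
    and L: "ln (2 / (a + b)) > 2"
  shows "exp (- t * (a - b)) * (1 + a * (exp t - 1) + b * (exp (-t) - 1))
         \<le> exp (t^2 / ln (2 / (a + b)))"
proof -
  define q where "q = a + b"
  define L where "L = ln (2 / q)"
  have qpos: "q > 0" using q q_def by simp
  have L2: "L > 2" using L unfolding L_def q_def .
  have eL: "exp L = 2 / q" unfolding L_def using qpos by simp
  have e1: "exp (1::real) \<ge> 5/2" using exp_lower_Taylor_quadratic[of 1] by simp
  have "exp (2::real) = exp 1 * exp 1" by (simp flip: exp_add)
  also have "\<dots> \<ge> 25/4" using e1 mult_mono[OF e1 e1] by simp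
  finally have e2: "exp (2::real) \<ge> 25/4" .
  have "exp L \<ge> exp 2" using L2 by simp
  hence "2 / q \<ge> 25/4" using eL e2 by simp
  hence qsmall: "q \<le> 8/25" using qpos by (simp add: field_simps)
  show ?thesis
  proof (cases "t \<le> L")
    case True
    have "1 + a * (exp t - 1) + b * (exp (-t) - 1) \<le> exp (a * (exp t - 1) + b * (exp (-t) - 1))"
      using exp_ge_add_one_self by (smt (verit))
    hence "exp (- t * (a - b)) * (1 + a * (exp t - 1) + b * (exp (-t) - 1))
        \<le> exp (- t * (a - b)) * exp (a * (exp t - 1) + b * (exp (-t) - 1))"
      by (intro mult_left_mono) auto
    also have "\<dots> = exp (a * (exp t - 1 - t) + b * (exp (-t) - 1 + t))"
      by (simp flip: exp_add add: algebra_simps)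
    also have "\<dots> \<le> exp (q * (exp t - 1 - t))"
      using mult_left_mono[OF sinh_ineq[OF t] b] unfolding q_def by (simp add: algebra_simps)
    also have "\<dots> \<le> exp (t^2 / L)"
    proof (cases "t = 0")
      case False
      hence tp: "t > 0" using t by simp
      have ph: "(exp t - 1 - t) / t^2 \<le> (exp L - 1 - L) / L^2" using phi_mono[OF tp True] .
      have "q * (exp L - 1 - L) = 2 - q - q * L" using eL qpos by (simp add: field_simps)
      also have "\<dots> \<le> L" using L2 qpos by (smt (verit) mult_pos_pos)
      finally have k: "q * (exp L - 1 - L) \<le> L" .
      have "exp t - 1 - t \<le> t^2 * ((exp L - 1 - L) / L^2)" using ph tp by (simp add: field_simps)
      hence "q * (exp t - 1 - t) \<le> t^2 * (q * (exp L - 1 - L)) / L^2"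
        using qpos by (smt (verit, ccfv_SIG) mult_left_mono times_divide_eq_right mult.left_commute)
      also have "\<dots> \<le> t^2 * L / L^2"
        using k L2 by (intro divide_right_mono mult_left_mono) auto
      also have "\<dots> = t^2 / L" using L2 by (simp add: power2_eq_square)
      finally show ?thesis by simp
    qed simp
    finally show ?thesis unfolding L_def q_def .
  next
    case False
    have f1: "exp (- t * (a - b)) \<le> exp (t * q)" using a b t unfolding q_def
      by (simp add: algebra_simps)
    have f2: "1 + a * (exp t - 1) + b * (exp (-t) - 1) \<le> 1 + q * exp t"
      proof -
      have "b * (exp (-t) - 1) \<le> 0" using b t by (simp add: mult_nonneg_nonpos)
      moreover have "0 \<le> b * exp t" using b by simp
      ultimately show ?thesis unfolding q_def using a by (simp add: algebra_simps)
    qed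
    have f0: "0 \<le> 1 + a * (exp t - 1) + b * (exp (-t) - 1)"
      proof -
      have "0 \<le> a * exp t" "0 \<le> b * exp (-t)" using a b by auto
      thus ?thesis using qsmall unfolding q_def by (simp add: algebra_simps)
    qed
    have "q * exp t = 2 * exp (t - L)" using eL qpos by (simp add: exp_diff field_simps)
    moreover have "1 \<le> exp (t - L)" using False by simp
    ultimately have f3: "1 + q * exp t \<le> 3 * exp (t - L)" by simp
    have "t * (1 - q) \<ge> 2 * (17/25)" using False L2 qsmall by (intro mult_mono) auto
    hence "exp (t * (1 - q)) \<ge> exp (34/25)" by simp
    moreover have "exp (34/25::real) \<ge> 3" using exp_lower_Taylor_quadratic[of "34/25"] by (simp add: power2_eq_square)
    ultimately have f4: "3 \<le> exp (t * (1 - q))" by linarith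
    have "exp (- t * (a - b)) * (1 + a * (exp t - 1) + b * (exp (-t) - 1))
          \<le> exp (t * q) * (3 * exp (t - L))"
      using f1 f2 f3 f0 by (intro mult_mono) auto
    also have "\<dots> \<le> exp (t * q) * (exp (t * (1 - q)) * exp (t - L))"
      using f4 by (intro mult_left_mono mult_right_mono) auto
    also have "\<dots> = exp (2 * t - L)" by (simp flip: exp_add add: algebra_simps)
    also have "\<dots> \<le> exp (t^2 / L)"
    proof -
      have "0 \<le> (t - L)^2" by simp
      hence "2 * t - L \<le> t^2 / L" using L2 by (simp add: field_simps power2_eq_square)
      thus ?thesis by simp
    qed
    finally show ?thesis unfolding L_def q_def .
  qed
qed


lemma lemma17_aux:
  fixes \<mu> :: "(nat \<Rightarrow> bool) measure" and i j :: nat and t :: real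
  assumes "prob_space \<mu>"
    and "sets \<mu> = sets cube"
    and t: "t \<ge> 0"
  shows "(\<integral>\<omega>. exp (t * ((of_bool (\<omega> i) - (\<integral>\<omega>. of_bool (\<omega> i) \<partial>\<mu>)) - (of_bool (\<omega> j) - (\<integral>\<omega>. of_bool (\<omega> j) \<partial>\<mu>)))) \<partial>\<mu>)
             \<le> exp (t\<^sup>2 / ln (2 / ((\<integral>\<omega>. of_bool (\<omega> i) \<partial>\<mu>) + (\<integral>\<omega>. of_bool (\<omega> j) \<partial>\<mu>) - 2 * (\<integral>\<omega>. of_bool (\<omega> i) * of_bool (\<omega> j) \<partial>\<mu>))))"
proof -
  interpret P: prob_space \<mu> by fact
  have mc: "measurable \<mu> N = measurable cube N" for N :: "bool measure"
    by (rule measurable_cong_sets[OF assms(2) refl])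
  have comp: "(\<lambda>\<omega>. \<omega> k) \<in> measurable \<mu> (count_space UNIV)" for k
    unfolding mc cube_def by (rule measurable_component_singleton) simp
  have bm: "(\<lambda>\<omega>. g (\<omega> k) (\<omega> l)) \<in> borel_measurable \<mu>" for g :: "bool \<Rightarrow> bool \<Rightarrow> real" and k l
  proof -
    have pm: "(\<lambda>\<omega>. (\<omega> k, \<omega> l)) \<in> measurable \<mu> (count_space UNIV \<Otimes>\<^sub>M count_space UNIV)"
      using comp by (intro measurable_Pair) auto
    have gm: "(\<lambda>(x, y). g x y) \<in> borel_measurable (count_space UNIV \<Otimes>\<^sub>M (count_space (UNIV::bool set)))"
      by (simp add: pair_measure_countable)
    show ?thesis using measurable_compose[OF pm gm] by simp
  qed
  have int: "integrable \<mu> (\<lambda>\<omega>. g (\<omega> k) (\<omega> l))" for g :: "bool \<Rightarrow> bool \<Rightarrow> real" and k l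
  proof (rule P.integrable_const_bound[where B = "Max (range (\<lambda>(x,y). norm (g x y)))"])
    show "AE x in \<mu>. norm (g (x k) (x l)) \<le> Max (range (\<lambda>(x,y). norm (g x y)))"
      by (intro AE_I2 Max_ge) auto
  qed (rule bm)
  define pI where "pI = (\<integral>\<omega>. of_bool (\<omega> i) \<partial>\<mu> :: real)"
  define pJ where "pJ = (\<integral>\<omega>. of_bool (\<omega> j) \<partial>\<mu> :: real)"
  define r where "r = (\<integral>\<omega>. of_bool (\<omega> i) * of_bool (\<omega> j) \<partial>\<mu> :: real)"
  define A where "A = (\<lambda>\<omega>::nat\<Rightarrow>bool. of_bool (\<omega> i \<and> \<not> \<omega> j) :: real)"
  define B where "B = (\<lambda>\<omega>::nat\<Rightarrow>bool. of_bool (\<not> \<omega> i \<and> \<omega> j) :: real)"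
  define a where "a = integral\<^sup>L \<mu> A"
  define b where "b = integral\<^sup>L \<mu> B"
  have intA: "integrable \<mu> A" unfolding A_def using int[of "\<lambda>x y. of_bool (x \<and> \<not> y)"] .
  have intB: "integrable \<mu> B" unfolding B_def using int[of "\<lambda>x y. of_bool (\<not> x \<and> y)"] .
  have intR: "integrable \<mu> (\<lambda>\<omega>. of_bool (\<omega> i) * of_bool (\<omega> j) :: real)"
    using int[of "\<lambda>x y. of_bool x * of_bool y"] .
  have a0: "a \<ge> 0" unfolding a_def A_def by simp
  have b0: "b \<ge> 0" unfolding b_def B_def by simp
  have "pI = (\<integral>\<omega>. of_bool (\<omega> i) * of_bool (\<omega> j) + A \<omega> \<partial>\<mu>)"
    unfolding pI_def A_def by (intro Bochner_Integration.integral_cong) auto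
  also have "\<dots> = r + a" unfolding r_def a_def using intA intR by simp
  finally have pIE: "pI = r + a" .
  have "pJ = (\<integral>\<omega>. of_bool (\<omega> i) * of_bool (\<omega> j) + B \<omega> \<partial>\<mu>)"
    unfolding pJ_def B_def by (intro Bochner_Integration.integral_cong) auto
  also have "\<dots> = r + b" unfolding r_def b_def using intB intR by simp
  finally have pJE: "pJ = r + b" .
  have ab1: "a + b \<le> 1"
  proof -
    have "a + b = (\<integral>\<omega>. A \<omega> + B \<omega> \<partial>\<mu>)" unfolding a_def b_def using intA intB by simp
    also have "\<dots> \<le> (\<integral>\<omega>. 1 \<partial>\<mu>)"
      using intA intB by (intro integral_mono) (auto simp: A_def B_def)
    finally show ?thesis by (simp add: P.prob_space)
  qed
  have pw: "exp (t * ((of_bool (\<omega> i) - pI) - (of_bool (\<omega> j) - pJ))) =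
        exp (- t * (a - b)) * (1 + A \<omega> * (exp t - 1) + B \<omega> * (exp (-t) - 1))" for \<omega> :: "nat \<Rightarrow> bool"
    unfolding pIE pJE A_def B_def
    by (cases "\<omega> i"; cases "\<omega> j") (simp_all add: algebra_simps flip: exp_add)
  have LHS: "(\<integral>\<omega>. exp (t * ((of_bool (\<omega> i) - pI) - (of_bool (\<omega> j) - pJ))) \<partial>\<mu>)
      = exp (- t * (a - b)) * (1 + a * (exp t - 1) + b * (exp (-t) - 1))"
    unfolding pw a_def b_def using intA intB by (simp add: P.prob_space)
  have den: "pI + pJ - 2 * r = a + b" using pIE pJE by simp
  have goal: "(\<integral>\<omega>. exp (t * ((of_bool (\<omega> i) - pI) - (of_bool (\<omega> j) - pJ))) \<partial>\<mu>)
             \<le> exp (t\<^sup>2 / ln (2 / (pI + pJ - 2 * r)))"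
  proof (cases "a + b = 0")
    case True
    hence "a = 0" "b = 0" using a0 b0 by auto
    thus ?thesis unfolding LHS den by simp
  next
    case False
    hence qpos: "a + b > 0" using a0 b0 by simp
    show ?thesis
    proof (cases "ln (2 / (a + b)) > 2")
      case True
      show ?thesis unfolding LHS den by (rule real_main[OF a0 b0 t qpos True])
    next
      case False
      have Lpos: "ln (2 / (a + b)) > 0" using qpos ab1 by simp
      show ?thesis
      proof (cases "t = 0")
        case True
        thus ?thesis unfolding LHS by simp
      next
        case tne: False
        hence tp: "t > 0" using t by simp
        define f where "f = (\<lambda>\<omega>::nat\<Rightarrow>bool. of_bool (\<omega> i) - of_bool (\<omega> j) :: real)"
        interpret H: interval_bounded_random_variable \<mu> f "-1" 1
        proof
          show "f \<in> borel_measurable \<mu>" unfolding f_def using bm[of "\<lambda>x y. of_bool x - of_bool y" i j] by simp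
          show "AE x in \<mu>. f x \<in> {- 1..1}" unfolding f_def by (intro AE_I2) auto
        qed
        have Ef: "P.expectation f = pI - pJ" unfolding f_def pI_def pJ_def
          using int[of "\<lambda>x y. of_bool x" i i] int[of "\<lambda>x y. of_bool x" j j] by simp
        have hf: "nn_integral \<mu> (\<lambda>x. exp (t * (f x - P.expectation f))) \<le> ennreal (exp (t\<^sup>2 * (1 - - 1)\<^sup>2 / 8))"
          by (rule H.Hoeffdings_lemma_nn_integral[OF tp])
        have eqf: "(\<lambda>x. exp (t * (f x - P.expectation f))) = (\<lambda>\<omega>. exp (t * ((of_bool (\<omega> i) - pI) - (of_bool (\<omega> j) - pJ))))"
          using Ef unfolding f_def by (auto simp: algebra_simps)
        have intE: "integrable \<mu> (\<lambda>\<omega>. exp (t * ((of_bool (\<omega> i) - pI) - (of_bool (\<omega> j) - pJ))))"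
          unfolding pw using intA intB by simp
        have "ennreal (\<integral>\<omega>. exp (t * ((of_bool (\<omega> i) - pI) - (of_bool (\<omega> j) - pJ))) \<partial>\<mu>) \<le> ennreal (exp (t\<^sup>2 / 2))"
        proof -
          have "(\<integral>\<^sup>+x. ennreal (exp (t * (f x - P.expectation f))) \<partial>\<mu>) =
                (\<integral>\<^sup>+\<omega>. ennreal (exp (t * ((of_bool (\<omega> i) - pI) - (of_bool (\<omega> j) - pJ)))) \<partial>\<mu>)"
            by (intro nn_integral_cong) (simp only: fun_cong[OF eqf])
          also have "\<dots> = ennreal (\<integral>\<omega>. exp (t * ((of_bool (\<omega> i) - pI) - (of_bool (\<omega> j) - pJ))) \<partial>\<mu>)"
            by (rule nn_integral_eq_integral[OF intE]) simp
          finally show ?thesis using hf by simp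
        qed
        hence "(\<integral>\<omega>. exp (t * ((of_bool (\<omega> i) - pI) - (of_bool (\<omega> j) - pJ))) \<partial>\<mu>) \<le> exp (t\<^sup>2 / 2)"
          by (simp add: ennreal_le_iff)
        also have "\<dots> \<le> exp (t\<^sup>2 / ln (2 / (a + b)))"
        proof -
          have "t\<^sup>2 / 2 \<le> t\<^sup>2 / ln (2 / (a + b))"
            using False Lpos by (intro divide_left_mono) auto
          thus ?thesis by simp
        qed
        finally show ?thesis unfolding den .
      qed
    qed
  qed
  thus ?thesis unfolding pI_def pJ_def r_def .
qed

theorem lemma17:
  fixes \<mu> :: "(nat \<Rightarrow> bool) measure" and i j :: nat and t :: real
  assumes "prob_space \<mu>"
    and "sets \<mu> = sets cube"
    and "t \<ge> 0"
  shows "(let X = (\<lambda>k \<omega>. of_bool (\<omega> k) :: real);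
              p = (\<lambda>k. \<integral>\<omega>. X k \<omega> \<partial>\<mu>);
              r = (\<integral>\<omega>. X i \<omega> * X j \<omega> \<partial>\<mu>)
          in (\<integral>\<omega>. exp (t * ((X i \<omega> - p i) - (X j \<omega> - p j))) \<partial>\<mu>)
             \<le> exp (t\<^sup>2 / ln (2 / (p i + p j - 2 * r))))"
  unfolding Let_def using lemma17_aux[OF assms] .

end
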